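(* Let $N\geq 0$ be an integer. Then for all real $t$, \[ \tanh t=\sum_{j=1}^{N}\frac{2^{2j}(2^{2j}-1)B_{2j}}{(2j)!}\,t^{2j-1}+\tau_N(t),\qquad \tau_N(t)=(-1)^N\frac{2^{2N+3}t^{2N+1}}{\pi^{2N}}\sum_{k=1}^{\infty}\frac{1}{(2k-1)^{2N}\bigl(\pi^2(2k-1)^2+4t^2\bigr)}. \] Moreover, for every real $t\neq 0$, \[ \tanh t=\sum_{j=1}^{N}\frac{2^{2j}(2^{2j}-1)B_{2j}}{(2j)!}\,t^{2j-1}+\xi(t,N)\,\frac{2^{2N+2}(2^{2N+2}-1)B_{2N+2}}{(2N+2)!}\,t^{2N+1} \] for some number $\xi(t,N)$ with $0<\xi(t,N)<1$.
   Context: The Bernoulli numbers $B_n$ are defined by $\frac{t}{e^t-1}=\sum_{n=0}^\infty B_n\frac{t^n}{n!}$ for $|t|<2\pi$. An empty sum is understood to be zero. *)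

theory Defs
  imports "HOL-Analysis.Analysis"
begin

definition bern_gf :: "real \<Rightarrow> real" where
  "bern_gf t = (if t = 0 then 1 else t / (exp t - 1))"

definition bernoulli :: "nat \<Rightarrow> real" where
  "bernoulli = (THE B. \<forall>t. \<bar>t\<bar> < 2 * pi \<longrightarrow>
      (\<lambda>n. B n * t ^ n / fact n) sums bern_gf t)"

end

theory Submission imports Defs "HOL-Complex_Analysis.Complex_Analysis" begin

lemma digamma_refl:
  fixes z :: complex
  assumes "z \<notin> \<int>\<^sub>\<le>\<^sub>0" "1 - z \<notin> \<int>\<^sub>\<le>\<^sub>0"
  shows "sin (of_real pi*z)/of_real pi * (Digamma (1-z) - Digamma z) = cos (of_real pi*z)"
proof -
  have a: "(rGamma has_field_derivative -rGamma z * Digamma z) (at z)"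
    using has_field_derivative_rGamma_complex'[of z UNIV] assms by simp
  have b0: "(rGamma has_field_derivative -rGamma (1-z) * Digamma (1-z)) (at (1-z))"
    using has_field_derivative_rGamma_complex'[of "1-z" UNIV] assms by simp
  have b: "((\<lambda>z. rGamma (1-z)) has_field_derivative rGamma (1-z) * Digamma (1-z)) (at z)"
  proof -
    have "((\<lambda>z. 1 - z) has_field_derivative -1) (at z)" by (auto intro!: derivative_eq_intros)
    from DERIV_chain2[where g="\<lambda>z. 1-z", OF b0 this] show ?thesis by simp
  qed
  have d1: "((\<lambda>z. rGamma z * rGamma (1-z)) has_field_derivative rGamma z * rGamma (1-z) * (Digamma (1-z) - Digamma z)) (at z)"
    using DERIV_mult[OF a b] by (simp add: algebra_simps)
  have d2: "((\<lambda>z. rGamma z * rGamma (1-z)) has_field_derivative cos(of_real pi*z)) (at z)"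
    unfolding rGamma_reflection_complex
    by (auto intro!: derivative_eq_intros)
  have "rGamma z * rGamma (1-z) * (Digamma (1-z) - Digamma z) = cos(of_real pi*z)"
    using DERIV_unique[OF d1 d2] .
  then show ?thesis by (simp add: rGamma_reflection_complex)
qed

lemma cosh_complex_of_real: "cosh (complex_of_real t) = complex_of_real (cosh t)"
  by (simp add: cosh_field_def exp_of_real flip: exp_of_real)
lemma sinh_complex_of_real: "sinh (complex_of_real t) = complex_of_real (sinh t)"
  by (simp add: sinh_field_def flip: exp_of_real)

lemma tanh_pf: "(\<lambda>k. 8*t/(pi^2*(2*real k+1)^2 + 4*t^2)) sums tanh (t::real)"
proof -
  define w :: complex where "w = \<i> * of_real (t/pi)"
  have pw: "of_real pi * (1/2 + w) = of_real (pi/2) + \<i> * of_real t"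
    by (simp add: w_def algebra_simps)
  have nz: "1/2 + w \<notin> \<int>\<^sub>\<le>\<^sub>0" "1/2 - w \<notin> \<int>\<^sub>\<le>\<^sub>0"
  proof -
    show "1/2 + w \<notin> \<int>\<^sub>\<le>\<^sub>0"
    proof
      assume "1/2 + w \<in> \<int>\<^sub>\<le>\<^sub>0"
      then obtain n where "1/2 + w = - of_nat n" by (auto elim!: nonpos_Ints_cases')
      then have "Re (1/2 + w) = Re (- of_nat n)" by simp
      then show False by (simp add: w_def)
    qed
    show "1/2 - w \<notin> \<int>\<^sub>\<le>\<^sub>0"
    proof
      assume "1/2 - w \<in> \<int>\<^sub>\<le>\<^sub>0"
      then obtain n where "1/2 - w = - of_nat n" by (auto elim!: nonpos_Ints_cases')
      then have "Re (1/2 - w) = Re (- of_nat n)" by simp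
      then show False by (simp add: w_def)
    qed
  qed
  have nz0: "1/2 + w \<noteq> 0" "1/2 - w \<noteq> 0" using nz zero_in_nonpos_Ints by metis+
  have "sin (of_real pi*(1/2+w))/of_real pi * (Digamma (1-(1/2+w)) - Digamma (1/2+w)) = cos (of_real pi*(1/2+w))"
    using digamma_refl[of "1/2+w"] nz by simp
  also have "sin (of_real pi*(1/2+w)) = cosh (complex_of_real t)"
    unfolding pw sin_add cosh_conv_cos by (simp flip: sin_of_real cos_of_real)
  also have "cos (of_real pi*(1/2+w)) = -\<i> * sinh (complex_of_real t)"
    unfolding pw cos_add sinh_conv_sin by (simp flip: sin_of_real cos_of_real)
  also have "1 - (1/2 + w) = 1/2 - w" by simp
  finally have eq1: "cosh (complex_of_real t) / of_real pi * (Digamma (1/2 - w) - Digamma (1/2 + w)) = -\<i> * sinh (complex_of_real t)" .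
  have ch: "cosh (complex_of_real t) \<noteq> 0" unfolding cosh_complex_of_real by simp
  have eq2: "Digamma (1/2 + w) - Digamma (1/2 - w) = \<i> * of_real pi * of_real (tanh t)"
  proof -
    have "Digamma (1/2 + w) - Digamma (1/2 - w) = - (of_real pi / cosh (complex_of_real t)) *
      (cosh (complex_of_real t) / of_real pi * (Digamma (1/2 - w) - Digamma (1/2 + w)))"
      using ch by (simp add: field_simps)
    also note eq1
    finally show ?thesis using ch 
      by (simp add: tanh_def sinh_complex_of_real cosh_complex_of_real field_simps)
  qed
  have s1: "summable (\<lambda>k. inverse (of_nat (Suc k)) - inverse (1/2 + w + of_nat k))"
    using summable_Digamma[OF nz0(1)] .
  have s2: "summable (\<lambda>k. inverse (of_nat (Suc k)) - inverse (1/2 - w + of_nat k))"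
    using summable_Digamma[OF nz0(2)] .
  have "(\<lambda>k. (inverse (of_nat (Suc k)) - inverse (1/2 + w + of_nat k)) -
             (inverse (of_nat (Suc k)) - inverse (1/2 - w + of_nat k))) sums
        (Digamma (1/2 + w) - Digamma (1/2 - w))"
    unfolding Digamma_def using sums_diff[OF summable_sums[OF s1] summable_sums[OF s2]] by simp
  also note eq2
  finally have s3: "(\<lambda>k. (inverse (of_nat (Suc k)) - inverse (1/2 + w + of_nat k)) -
             (inverse (of_nat (Suc k)) - inverse (1/2 - w + of_nat k))) sums (\<i> * of_real pi * of_real (tanh t))" .
  have tm: "(inverse (of_nat (Suc k)) - inverse (1/2 + w + of_nat k)) -
             (inverse (of_nat (Suc k)) - inverse (1/2 - w + of_nat k)) =
        \<i> * of_real pi * of_real (8*t/(pi^2*(2*real k+1)^2 + 4*t^2))" for k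
  proof -
    define a :: complex where "a = of_real (real k + 1/2)"
    have e1: "1/2 + w + of_nat k = a + w" "1/2 - w + of_nat k = a - w" by (simp_all add: a_def)
    have n1: "a + w \<noteq> 0"
    proof
      assume "a + w = 0" then have "Re (a+w) = 0" by simp
      then show False by (simp add: a_def w_def)
    qed
    have n2: "a - w \<noteq> 0"
    proof
      assume "a - w = 0" then have "Re (a-w) = 0" by simp
      then show False by (simp add: a_def w_def)
    qed
    have "inverse (a - w) - inverse (a + w) = 2 * w / ((a - w) * (a + w))"
      using n1 n2 by (simp add: field_simps)
    also have "(a - w) * (a + w) = of_real ((real k + 1/2)^2 + (t/pi)^2)"
      by (simp add: a_def w_def algebra_simps power2_eq_square)
    also have "2 * w = \<i> * of_real (2 * t / pi)" by (simp add: w_def)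
    also have "\<i> * of_real (2 * t / pi) / complex_of_real ((real k + 1/2)^2 + (t/pi)^2) =
       \<i> * of_real pi * of_real (8*t/(pi^2*(2*real k+1)^2 + 4*t^2))"
    proof -
      have r: "2 * t / pi / ((real k + 1/2)^2 + (t/pi)^2) = pi * (8*t/(pi^2*(2*real k+1)^2 + 4*t^2))"
        by (simp add: field_simps power2_eq_square) 
      have "\<i> * complex_of_real (2 * t / pi) / complex_of_real ((real k + 1/2)^2 + (t/pi)^2)
          = \<i> * complex_of_real (2 * t / pi / ((real k + 1/2)^2 + (t/pi)^2))"
        by (simp only: of_real_divide times_divide_eq_right)
      also have "\<dots> = \<i> * complex_of_real (pi * (8*t/(pi^2*(2*real k+1)^2 + 4*t^2)))"
        by (simp only: r)
      also have "\<dots> = \<i> * of_real pi * of_real (8*t/(pi^2*(2*real k+1)^2 + 4*t^2))"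
        by (simp only: of_real_mult mult.assoc)
      finally show ?thesis .
    qed
    finally have fin: "inverse (a - w) - inverse (a + w) =
        \<i> * of_real pi * of_real (8*t/(pi^2*(2*real k+1)^2 + 4*t^2))" .
    have "(inverse (of_nat (Suc k)) - inverse (1/2 + w + of_nat k)) -
             (inverse (of_nat (Suc k)) - inverse (1/2 - w + of_nat k)) = inverse (a - w) - inverse (a + w)"
      unfolding e1 by (simp add: algebra_simps)
    then show ?thesis using fin by (rule trans)
  qed
  have "(\<lambda>k. inverse (\<i> * of_real pi) * (\<i> * of_real pi * of_real (8*t/(pi^2*(2*real k+1)^2 + 4*t^2)))) sums
        (inverse (\<i> * of_real pi) * (\<i> * of_real pi * of_real (tanh t)))"
    using sums_mult[OF s3[unfolded tm]] by blast
  then have "(\<lambda>k. complex_of_real (8*t/(pi^2*(2*real k+1)^2 + 4*t^2))) sums complex_of_real (tanh t)"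
    by (simp add: field_simps)
  then show ?thesis by (simp only: sums_of_real_iff)
qed

lemma coeff_match:
  fixes d q :: "nat \<Rightarrow> real" and f R :: "real \<Rightarrow> real" and r C :: real
  assumes r: "0 < r"
    and sm: "\<And>x. \<bar>x\<bar> < r \<Longrightarrow> (\<lambda>n. d n * x^n) sums f x"
    and eq: "\<And>x. \<bar>x\<bar> < r \<Longrightarrow> f x = (\<Sum>n<K. q n * x^n) + x^K * R x"
    and bd: "\<And>x. \<bar>x\<bar> < r \<Longrightarrow> \<bar>R x\<bar> \<le> C"
    and m: "m < K"
  shows "d m = q m"
proof -
  define e where "e n = d n - (if n < K then q n else 0)" for n
  have se: "(\<lambda>n. e n * x^n) sums (x^K * R x)" if "\<bar>x\<bar> < r" for x
  proof -
    have "(\<lambda>n. (if n<K then q n else 0)*x^n) sums (\<Sum>n\<in>{..<K}. (if n<K then q n else 0)*x^n)"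
      by (rule sums_finite) auto
    then have "(\<lambda>n. (if n<K then q n else 0)*x^n) sums (\<Sum>n<K. q n * x^n)" by simp
    from sums_diff[OF sm[OF that] this]
    have "(\<lambda>n. d n * x^n - (if n<K then q n else 0)*x^n) sums (f x - (\<Sum>n<K. q n * x^n))" .
    moreover have "(\<lambda>n. d n * x^n - (if n<K then q n else 0)*x^n) = (\<lambda>n. e n * x^n)"
      by (simp add: e_def fun_eq_iff algebra_simps)
    ultimately show ?thesis using eq[OF that] by simp
  qed
  have "e m = 0" if "m < K" for m
    using that
  proof (induction m rule: less_induct)
    case (less m)
    have z: "e i * x^i = 0" if "i < m" for i x using less that by simp
    have s2: "(\<lambda>n. e (n+m) * x^n) sums (x^(K-m) * R x)" if "x \<noteq> 0" "norm x < r" for x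
    proof -
      have "(\<lambda>n. e n * x^n) sums (x^K * R x)" using se that by simp
      then have "(\<lambda>n. e (n+m) * x^(n+m)) sums (x^K * R x)"
        using sums_zero_iff_shift[of m "\<lambda>n. e n * x^n"] z by simp
      then have "(\<lambda>n. e (n+m) * x^(n+m) / x^m) sums (x^K * R x / x^m)" by (rule sums_divide)
      moreover have "x^K * R x / x^m = x^(K-m) * R x" using less.prems that by (simp add: power_diff)
      moreover have "(\<lambda>n. e (n+m) * x^(n+m) / x^m) = (\<lambda>n. e(n+m)*x^n)" using that by (simp add: power_add fun_eq_iff)
      ultimately show ?thesis by simp
    qed
    have l1: "((\<lambda>x. x^(K-m) * R x) \<longlongrightarrow> e (0+m)) (at 0)"
      by (rule powser_limit_0_strong[OF r]) (use s2 in auto)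
    have l2: "((\<lambda>x. x^(K-m) * R x) \<longlongrightarrow> 0) (at (0::real))"
    proof (rule tendsto_0_le[where f="\<lambda>x. x^(K-m)" and K = "max C 1"])
      have "((\<lambda>x::real. x^(K-m)) \<longlongrightarrow> 0^(K-m)) (at 0)" by (intro tendsto_intros)
      then show "((\<lambda>x::real. x^(K-m)) \<longlongrightarrow> 0) (at 0)" using less.prems by simp
      have "eventually (\<lambda>x::real. x \<in> ball 0 r) (at 0)"
        by (rule eventually_at_in_open') (use r in auto)
      then show "eventually (\<lambda>x. norm (x^(K-m) * R x) \<le> norm (x^(K-m)) * max C 1) (at 0)"
      proof (rule eventually_mono)
        fix x :: real assume "x \<in> ball 0 r"
        then have "\<bar>R x\<bar> \<le> max C 1" using bd by (simp add: dist_real_def) (metis max.coboundedI1)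
        then show "norm (x^(K-m) * R x) \<le> norm (x^(K-m)) * max C 1"
          by (simp add: abs_mult mult_left_mono)
      qed
    qed
    show ?case using LIM_unique[OF l1 l2] by simp
  qed
  then have "e m = 0" using m .
  then show ?thesis using m by (simp add: e_def)
qed

definition H :: "complex \<Rightarrow> complex" where "H z = (if z = 0 then 1 else (exp z - 1)/z)"

lemma H_holo: "H holomorphic_on UNIV"
proof -
  have p: "(\<lambda>z. if z = 0 then deriv exp 0 else (exp z - exp 0)/(z - 0)) holomorphic_on (UNIV::complex set)"
    by (rule pole_lemma) (auto intro: holomorphic_intros)
  have d: "deriv exp (0::complex) = 1" using DERIV_imp_deriv[OF DERIV_exp, of "0::complex"] by simp
  have eq: "(\<lambda>z. if z = 0 then deriv exp 0 else (exp z - exp 0)/(z - 0)) = H"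
    by (auto simp: fun_eq_iff H_def d)
  from p show ?thesis unfolding eq .
qed

lemma H_nz: fixes z :: complex assumes n: "norm z < 2*pi" shows "H z \<noteq> 0"
proof
  assume h: "H z = 0"
  then have z0: "z \<noteq> 0" by (auto simp: H_def split: if_splits)
  then have "exp z = 1" using h by (simp add: H_def)
  then obtain k :: int where re: "Re z = 0" and im: "Im z = of_int (2*k) * pi" by (auto simp: exp_eq_1)
  have "k \<noteq> 0" using z0 re im by (auto simp: complex_eq_iff)
  then have "1 \<le> \<bar>real_of_int k\<bar>" by linarith
  then have "2*pi \<le> 2*pi * \<bar>real_of_int k\<bar>" by simp
  also have "\<dots> = norm z" using re im by (simp add: cmod_eq_Im abs_mult)
  finally show False using n by simp
qed

lemma bern_exists: "\<exists>B. \<forall>t. \<bar>t\<bar> < 2 * pi \<longrightarrow> (\<lambda>n. B n * t ^ n / fact n) sums bern_gf t"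
proof -
  define G where "G z = inverse (H z)" for z
  have hol: "G holomorphic_on ball 0 (2*pi)"
    unfolding G_def[abs_def]
    by (rule holomorphic_on_inverse) (auto intro: holomorphic_on_subset[OF H_holo] simp: H_nz)
  define B where "B n = Re ((deriv ^^ n) G 0 / fact n) * fact n" for n
  show ?thesis
  proof (intro exI[of _ B] allI impI)
    fix t :: real assume t: "\<bar>t\<bar> < 2*pi"
    have "complex_of_real t \<in> ball 0 (2*pi)" using t by simp
    from holomorphic_power_series[OF hol this]
    have "(\<lambda>n. (deriv ^^ n) G 0 / fact n * (complex_of_real t - 0) ^ n) sums G (complex_of_real t)" .
    from sums_Re[OF this] have "(\<lambda>n. Re ((deriv ^^ n) G 0 / fact n * (complex_of_real t) ^ n)) sums Re (G (complex_of_real t))" by simp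
    moreover have "Re (G (complex_of_real t)) = bern_gf t"
      by (cases "t = 0") (simp_all add: G_def H_def bern_gf_def exp_of_real)
    moreover have "Re ((deriv ^^ n) G 0 / fact n * (complex_of_real t) ^ n) = B n * t ^ n / fact n" for n
    proof -
      have "(deriv ^^ n) G 0 / fact n * (complex_of_real t) ^ n = complex_of_real (t^n) * ((deriv ^^ n) G 0 / fact n)"
        by (simp add: of_real_power)
      also have "Re \<dots> = t^n * Re ((deriv ^^ n) G 0 / fact n)" by (metis scaleR_complex.sel(1) scaleR_conv_of_real)
      finally show ?thesis by (simp add: B_def)
    qed
    ultimately show "(\<lambda>n. B n * t ^ n / fact n) sums bern_gf t" by simp
  qed
qed

lemma bern_unique:
  assumes "\<forall>t. \<bar>t\<bar> < 2 * pi \<longrightarrow> (\<lambda>n. B n * t ^ n / fact n) sums bern_gf t"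
      and "\<forall>t. \<bar>t\<bar> < 2 * pi \<longrightarrow> (\<lambda>n. B' n * t ^ n / fact n) sums bern_gf t"
  shows "B = B'"
proof
  fix m
  have sm: "(\<lambda>n. ((B n - B' n)/fact n) * x^n) sums 0" if "\<bar>x\<bar> < 2*pi" for x
  proof -
    from sums_diff[OF assms(1)[rule_format, OF that] assms(2)[rule_format, OF that]]
    show ?thesis by (simp add: field_simps)
  qed
  have "(B m - B' m)/fact m = (\<lambda>_. 0) m"
    by (rule coeff_match[where r="2*pi" and f="\<lambda>_. 0" and K="Suc m" and R="\<lambda>_. 0" and C=0])
       (use sm in auto)
  then show "B m = B' m" by simp
qed

lemma bernoulli_prop: "\<forall>t. \<bar>t\<bar> < 2 * pi \<longrightarrow> (\<lambda>n. bernoulli n * t ^ n / fact n) sums bern_gf t"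
proof -
  have "\<exists>!B. \<forall>t. \<bar>t\<bar> < 2 * pi \<longrightarrow> (\<lambda>n. B n * t ^ n / fact n) sums bern_gf t"
    using bern_exists bern_unique by blast
  from theI'[OF this] show ?thesis unfolding bernoulli_def .
qed

lemma bern_gf_double: "bern_gf x - bern_gf (2*x) = x/2 - (x/2) * tanh (x/2)"
proof (cases "x = 0")
  case True then show ?thesis by (simp add: bern_gf_def)
next
  case False
  define e where "e = exp x"
  have e0: "e > 0" "e \<noteq> 1" using False by (auto simp: e_def)
  have e2: "exp (2*x) = e^2" by (simp add: e_def exp_double)
  have th: "tanh (x/2) = (1 - 1/e) / (1 + 1/e)"
    by (simp add: tanh_real_altdef e_def exp_minus inverse_eq_divide)
  have n0: "e - 1 \<noteq> 0" "e + 1 \<noteq> 0" using e0 by auto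
  have sq: "e^2 - 1 = (e-1)*(e+1)" by (simp add: algebra_simps power2_eq_square)
  have t2: "(1 - 1/e)/(1+1/e) = (e-1)/(e+1)"
  proof -
    have h1: "e*(1-1/e) = e - 1" and h2: "e*(1+1/e) = e+1" using e0 by (simp_all add: algebra_simps)
    have "e \<noteq> 0" using e0 by simp
    from mult_divide_mult_cancel_left[OF this, of "1-1/e" "1+1/e"]
    show ?thesis unfolding h1 h2 by simp
  qed
  have n2: "e*e - 1 \<noteq> 0" using sq n0 by (simp add: power2_eq_square)
  have l: "x/(e-1) - 2*x/(e^2-1) = x/(e+1)"
  proof -
    have "x/(e-1) - 2*x/(e^2-1) = (x*(e+1) - 2*x)/((e-1)*(e+1))" unfolding sq using n0
      by (simp add: diff_divide_distrib)
    also have "x*(e+1) - 2*x = x*(e-1)" by (simp add: algebra_simps)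
    also have "x*(e-1)/((e-1)*(e+1)) = x/(e+1)" using n0 by simp
    finally show ?thesis .
  qed
  have r: "x/2 - x/2*((e-1)/(e+1)) = x/(e+1)" using n0 by (simp add: field_simps)
  show ?thesis using False l r
    by (simp add: bern_gf_def e2 th t2 flip: e_def)
qed

lemma geom_rem:
  fixes a x :: real assumes "a > 0" "x \<ge> 0"
  shows "1/(a+x) = (\<Sum>j<N. (-x)^j/a^(j+1)) + (-x)^N/(a^N*(a+x))"
proof (induction N)
  case 0 then show ?case by simp
next
  case (Suc N)
  have ax: "a + x > 0" "a^N > 0" using assms by auto
  have h1: "1 + (-x)/(a+x) = a/(a+x)" using ax by (simp add: field_simps)
  have q: "(-x)^(N+1)/(a^(N+1)*(a+x)) = (-x)^N/a^(N+1) * ((-x)/(a+x))"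
    by (simp only: power_add power_one_right times_divide_times_eq)
  have "(-x)^N/a^(N+1) + (-x)^(N+1)/(a^(N+1)*(a+x)) = (-x)^N/a^(N+1) * (1 + (-x)/(a+x))"
    unfolding q by (simp only: distrib_left mult_1_right)
  also have "\<dots> = (-x)^N/a^(N+1) * (a/(a+x))" by (simp only: h1)
  also have "\<dots> = (-x)^N/(a^N*(a+x))" using ax assms by simp
  finally have "(-x)^N/(a^N*(a+x)) = (-x)^N/a^(N+1) + (-x)^(N+1)/(a^(N+1)*(a+x))" by simp
  then show ?case using Suc by simp
qed

definition T :: "nat \<Rightarrow> real \<Rightarrow> nat \<Rightarrow> real" where
  "T N t k = 1 / ((2 * real (Suc k) - 1)^(2*N) * (pi^2 * (2 * real (Suc k) - 1)^2 + 4 * t^2))"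

definition S :: "nat \<Rightarrow> real \<Rightarrow> real" where "S N t = suminf (T N t)"

lemma T_bounds: "0 < T N t k" "T N t k \<le> 1/(real k + 1)^2"
proof -
  define uu where "uu = 2 * real (Suc k) - 1"
  have o1: "uu \<ge> 1" "uu \<ge> real k + 1" by (simp_all add: uu_def)
  have p1: "1 \<le> uu^(2*N)" using o1 by (simp add: one_le_power)
  have pi1: "1 \<le> pi^2" using one_le_power[of pi 2] pi_gt3 by simp
  have Tt: "T N t k = 1/(uu^(2*N)*(pi^2* uu^2+4*t^2))" by (simp add: T_def uu_def)
  have "(real k+1)^2 \<le> uu^2" using o1 by (simp add: power_mono)
  also have "uu^2 \<le> pi^2 * uu^2 + 4*t^2"
  proof -
    have "0 \<le> 4*t^2" by simp
    moreover have "1 * uu^2 \<le> pi^2 * uu^2" by (rule mult_right_mono[OF pi1]) simp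
    ultimately show ?thesis by linarith
  qed
  also have "\<dots> \<le> uu^(2*N) * (pi^2 * uu^2 + 4*t^2)"
    using mult_right_mono[OF p1, of "pi^2 * uu^2 + 4*t^2"] by simp
  finally have le: "(real k+1)^2 \<le> uu^(2*N) * (pi^2 * uu^2 + 4*t^2)" .
  have pos: "0 < (real k+1)^2" by simp
  have Dp: "0 < uu^(2*N) * (pi^2 * uu^2 + 4*t^2)" using le pos by linarith
  show "0 < T N t k" unfolding Tt using Dp by simp
  show "T N t k \<le> 1/(real k + 1)^2" unfolding Tt
    by (rule divide_left_mono[OF le]) (use Dp pos in \<open>auto intro: mult_pos_pos\<close>)
qed

lemma T_summable: "summable (T N t)"
proof (rule summable_comparison_test)
  have "summable (\<lambda>n. 1 / real ((n+1)^2))" by (rule sums_summable[OF inverse_squares_sums])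
  then show "summable (\<lambda>k. 1/(real k + 1)^2)" by (simp only: of_nat_power of_nat_add of_nat_1)
  show "\<exists>M. \<forall>n\<ge>M. norm (T N t n) \<le> 1 / (real n + 1)\<^sup>2"
    using T_bounds by (auto intro!: exI[of _ 0] simp: abs_of_pos)
qed

lemma S_pos: "0 < S N t"
  unfolding S_def by (rule suminf_pos[OF T_summable]) (simp add: T_bounds)

lemma T_mono: "T N t k \<le> T N 0 k" and T_strict: "t \<noteq> 0 \<Longrightarrow> T N t k < T N 0 k"
proof -
  define uu where "uu = 2 * real (Suc k) - 1"
  have o1: "uu \<ge> 1" by (simp_all add: uu_def)
  have Tt: "T N t k = 1/(uu^(2*N)*(pi^2* uu^2+4*t^2))" for t by (simp add: T_def uu_def)
  have p: "0 < uu^(2*N)" "0 < pi^2* uu^2" using o1 by simp_all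
  have d0: "0 < uu^(2*N)*(pi^2* uu^2+4*0^2)" using p by simp
  have dt: "0 < uu^(2*N)*(pi^2* uu^2+4*t^2)" using p by (simp add: add_pos_nonneg)
  have "uu^(2*N)*(pi^2* uu^2+4*0^2) \<le> uu^(2*N)*(pi^2* uu^2+4*t^2)"
    using p by (intro mult_left_mono) auto
  then show "T N t k \<le> T N 0 k" unfolding Tt
    by (rule divide_left_mono) (use d0 dt in auto)
  assume t: "t \<noteq> 0"
  have "uu^(2*N)*(pi^2* uu^2+4*0^2) < uu^(2*N)*(pi^2* uu^2+4*t^2)"
    using p t by (intro mult_strict_left_mono) auto
  then show "T N t k < T N 0 k" unfolding Tt
    by (rule divide_strict_left_mono) (use d0 dt in auto)
qed

lemma S_le: "S N t \<le> S N 0"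
  unfolding S_def by (rule suminf_le[OF T_mono T_summable T_summable])

lemma S_less: assumes "t \<noteq> 0" shows "S N t < S N 0"
proof -
  have "0 < (\<Sum>k. T N 0 k - T N t k)"
    by (rule suminf_pos) (use T_summable T_strict[OF assms] in \<open>auto intro: summable_diff\<close>)
  also have "\<dots> = S N 0 - S N t" unfolding S_def by (rule suminf_diff[OF T_summable T_summable, symmetric])
  finally show ?thesis by simp
qed

lemma pow_aux: "(-(4*t^2))^j = (-1)^j * 2^(2*j) * (t::real)^(2*j)"
proof -
  have "(-(4*t^2))^j = (-1)^j * 4^j * (t^2)^j" by (simp only: power_minus[of "4*t^2" j] power_mult_distrib mult.assoc)
  also have "(4::real)^j = 2^(2*j)" by (simp add: power_mult)
  also have "(t^2)^j = t^(2*j)" by (simp add: power_mult)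
  finally show ?thesis .
qed

lemma term_expand:
  "8*t/(pi^2*(2*real k+1)^2+4*t^2) = (\<Sum>j<N. (8*t*(-(4*t^2))^j/pi^(2*j)) * T j 0 k)
      + ((-1)^N*2^(2*N+3)*t^(2*N+1)/pi^(2*N)) * T N t k"
proof -
  define uu where "uu = 2*real(Suc k) - 1"
  have o1: "uu \<ge> 1" by (simp add: uu_def)
  have oe: "2*real k + 1 = uu" by (simp add: uu_def)
  define a where "a = pi^2* uu^2"
  have a0: "a > 0" using o1 by (simp add: a_def)
  have Tt: "T j s k = 1/(uu^(2*j)*(a+4* s^2))" for j s by (simp add: T_def uu_def a_def)
  have ap: "a^j = pi^(2*j)* uu^(2*j)" for j by (simp add: a_def power_mult_distrib power_mult)
  have g: "1/(a + 4*t^2) = (\<Sum>j<N. (-(4*t^2))^j/a^(j+1)) + (-(4*t^2))^N/(a^N*(a+4*t^2))"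
    by (rule geom_rem) (use a0 in auto)
  have "8*t/(pi^2*(2*real k+1)^2+4*t^2) = 8*t * (1/(a + 4*t^2))" by (simp add: oe a_def)
  also have "\<dots> = (\<Sum>j<N. 8*t*((-(4*t^2))^j/a^(j+1))) + 8*t*((-(4*t^2))^N/(a^N*(a+4*t^2)))"
    unfolding g by (simp add: sum_distrib_left distrib_left)
  also have "(\<Sum>j<N. 8*t*((-(4*t^2))^j/a^(j+1))) = (\<Sum>j<N. (8*t*(-(4*t^2))^j/pi^(2*j)) * T j 0 k)"
  proof (rule sum.cong[OF refl])
    fix j
    have "a^(j+1) = pi^(2*j)*(uu^(2*j)*a)" using ap[of j] by simp
    then show "8*t*((-(4*t^2))^j/a^(j+1)) = (8*t*(-(4*t^2))^j/pi^(2*j)) * T j 0 k"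
      unfolding Tt using o1 a0 by simp
  qed
  also have "8*t*((-(4*t^2))^N/(a^N*(a+4*t^2))) = ((-1)^N*2^(2*N+3)*t^(2*N+1)/pi^(2*N)) * T N t k"
    unfolding Tt ap pow_aux using o1 by (simp add: power_add field_simps)
  finally show ?thesis .
qed

lemma expand: "tanh t = (\<Sum>j<N. (8*t*(-(4*t^2))^j/pi^(2*j)) * S j 0)
      + ((-1)^N*2^(2*N+3)*t^(2*N+1)/pi^(2*N)) * S N t"
proof -
  have "(\<lambda>k. (\<Sum>j<N. (8*t*(-(4*t^2))^j/pi^(2*j)) * T j 0 k) + ((-1)^N*2^(2*N+3)*t^(2*N+1)/pi^(2*N)) * T N t k)
     sums ((\<Sum>j<N. (8*t*(-(4*t^2))^j/pi^(2*j)) * S j 0) + ((-1)^N*2^(2*N+3)*t^(2*N+1)/pi^(2*N)) * S N t)"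
    unfolding S_def by (intro sums_add sums_sum sums_mult summable_sums T_summable)
  also have "(\<lambda>k. (\<Sum>j<N. (8*t*(-(4*t^2))^j/pi^(2*j)) * T j 0 k) + ((-1)^N*2^(2*N+3)*t^(2*N+1)/pi^(2*N)) * T N t k)
     = (\<lambda>k. 8*t/(pi^2*(2*real k+1)^2+4*t^2))"
    by (rule ext, rule term_expand[symmetric])
  finally show ?thesis using tanh_pf[of t] sums_unique2 by blast
qed

definition qc :: "nat \<Rightarrow> real" where
  "qc n = (if n = 1 then 1/2 else if even n \<and> n \<ge> 2 then
             -2 * (-1)^(n div 2 - 1) * S (n div 2 - 1) 0 / pi^(n - 2) else 0)"

lemma poly_qc: "(\<Sum>n<Suc (Suc (2*M)). qc n * x^n) = x/2 - (\<Sum>j<M. 2 * (-1)^j * S j 0 / pi^(2*j) * x^(2*j+2))"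
proof (induction M)
  case 0 then show ?case by (simp add: qc_def)
next
  case (Suc M)
  have a: "qc (Suc (Suc (2*M))) = -2 * (-1)^M * S M 0 / pi^(2*M)" by (simp add: qc_def)
  have b: "qc (Suc (Suc (Suc (2*M)))) = 0" by (simp add: qc_def)
  have c: "Suc (Suc (2 * Suc M)) = Suc (Suc (Suc (Suc (2*M))))" by simp
  show ?case unfolding c using Suc a b by (simp add: algebra_simps)
qed

lemma coef: "2^(2*j+2) * (2^(2*j+2) - 1) * bernoulli (2*j+2) / fact (2*j+2) = 2^(2*j+3) * (-1)^j * S j 0 / pi^(2*j)"
proof -
  define d where "d n = bernoulli n * (1 - 2^n) / fact n" for n
  define M where "M = Suc j"
  define R where "R x = -((-1)^M * 2 / pi^(2*M) * S M (x/2))" for x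
  have sm: "(\<lambda>n. d n * x^n) sums (bern_gf x - bern_gf (2*x))" if "\<bar>x\<bar> < pi" for x
  proof -
    have "\<bar>x\<bar> < 2*pi" "\<bar>2*x\<bar> < 2*pi" using that pi_gt_zero by auto
    from sums_diff[OF bernoulli_prop[rule_format, OF this(1)] bernoulli_prop[rule_format, OF this(2)]]
    have "(\<lambda>n. bernoulli n * x ^ n / fact n - bernoulli n * (2*x) ^ n / fact n) sums (bern_gf x - bern_gf (2*x))" .
    moreover have "(\<lambda>n. bernoulli n * x ^ n / fact n - bernoulli n * (2*x) ^ n / fact n) = (\<lambda>n. d n * x^n)"
      by (simp add: fun_eq_iff d_def power_mult_distrib diff_divide_distrib algebra_simps)
    ultimately show ?thesis by simp
  qed
  have eq: "bern_gf x - bern_gf (2*x) = (\<Sum>n<Suc (Suc (2*M)). qc n * x^n) + x^(Suc (Suc (2*M))) * R x" for x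
  proof -
    have ex: "tanh (x/2) = (\<Sum>j<M. (8*(x/2)*(-(4*(x/2)^2))^j/pi^(2*j)) * S j 0)
      + ((-1)^M*2^(2*M+3)*(x/2)^(2*M+1)/pi^(2*M)) * S M (x/2)" by (rule expand)
    have s1: "(x/2) * (\<Sum>j<M. (8*(x/2)*(-(4*(x/2)^2))^j/pi^(2*j)) * S j 0) =
        (\<Sum>j<M. 2 * (-1)^j * S j 0 / pi^(2*j) * x^(2*j+2))"
      unfolding sum_distrib_left
    proof (rule sum.cong[OF refl])
      fix j
      have "4*(x/2)^2 = x^2" by (simp add: power_divide)
      then have "(-(4*(x/2)^2))^j = (-(x^2))^j" by simp
      also have "\<dots> = (-1)^j * x^(2*j)" by (simp only: power_minus[of "x^2" j] power_mult)
      finally have "(-(4*(x/2)^2))^j = (-1)^j * x^(2*j)" .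
      then show "(x/2) * ((8*(x/2)*(-(4*(x/2)^2))^j/pi^(2*j)) * S j 0) = 2 * (-1)^j * S j 0 / pi^(2*j) * x^(2*j+2)"
        by (simp add: power_add power2_eq_square)
    qed
    have s2: "(x/2) * (((-1)^M*2^(2*M+3)*(x/2)^(2*M+1)/pi^(2*M)) * S M (x/2)) = 
        x^(Suc (Suc (2*M))) * ((-1)^M * 2 / pi^(2*M) * S M (x/2))"
      by (simp add: power_divide power_add field_simps)
    have "bern_gf x - bern_gf (2*x) = x/2 - (x/2) * tanh (x/2)" by (rule bern_gf_double)
    also have "\<dots> = x/2 - (\<Sum>j<M. 2 * (-1)^j * S j 0 / pi^(2*j) * x^(2*j+2))
        - x^(Suc (Suc (2*M))) * ((-1)^M * 2 / pi^(2*M) * S M (x/2))"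
      unfolding ex distrib_left s1 s2 by simp
    also have "\<dots> = (\<Sum>n<Suc (Suc (2*M)). qc n * x^n) + x^(Suc (Suc (2*M))) * R x"
      unfolding poly_qc R_def by simp
    finally show ?thesis .
  qed
  have bd: "\<bar>R x\<bar> \<le> 2 / pi^(2*M) * S M 0" for x
  proof -
    have "\<bar>R x\<bar> = 2 / pi^(2*M) * S M (x/2)" using S_pos[of M "x/2"]
      by (simp add: R_def abs_mult)
    also have "\<dots> \<le> 2 / pi^(2*M) * S M 0" by (intro mult_left_mono S_le) simp
    finally show ?thesis .
  qed
  have "d (2*j+2) = qc (2*j+2)"
    by (rule coeff_match[where r=pi and f="\<lambda>x. bern_gf x - bern_gf (2*x)" and R=R and K="Suc (Suc (2*M))"])
       (use sm eq bd in \<open>auto simp: M_def\<close>)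
  then have h: "bernoulli (2*j+2) / fact (2*j+2) * (1 - 2^(2*j+2)) = -2 * (-1)^j * S j 0 / pi^(2*j)"
    by (simp add: d_def qc_def)
  have "2^(2*j+2) * (2^(2*j+2) - 1) * bernoulli (2*j+2) / fact (2*j+2) =
        - (2^(2*j+2)) * (bernoulli (2*j+2) / fact (2*j+2) * (1 - 2^(2*j+2)))"
    by (simp add: algebra_simps)
  also have "\<dots> = 2^(2*j+3) * (-1)^j * S j 0 / pi^(2*j)" unfolding h by (simp add: power_add)
  finally show ?thesis .
qed

theorem theorem2:
  fixes N :: nat
  shows "(\<forall>t::real.
           tanh t = (\<Sum>j=1..N. 2^(2*j) * (2^(2*j) - 1) * bernoulli (2*j) / fact (2*j) * t^(2*j-1))
             + (-1)^N * 2^(2*N+3) * t^(2*N+1) / pi^(2*N) *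
               (\<Sum>k. 1 / ((2 * real (Suc k) - 1)^(2*N) * (pi^2 * (2 * real (Suc k) - 1)^2 + 4 * t^2))))
       \<and> (\<forall>t::real. t \<noteq> 0 \<longrightarrow> (\<exists>\<xi>. 0 < \<xi> \<and> \<xi> < 1 \<and>
           tanh t = (\<Sum>j=1..N. 2^(2*j) * (2^(2*j) - 1) * bernoulli (2*j) / fact (2*j) * t^(2*j-1))
             + \<xi> * (2^(2*N+2) * (2^(2*N+2) - 1) * bernoulli (2*N+2) / fact (2*N+2)) * t^(2*N+1)))"
proof -
  have P: "(\<Sum>j=1..N. 2^(2*j) * (2^(2*j) - 1) * bernoulli (2*j) / fact (2*j) * t^(2*j-1))
     = (\<Sum>j<N. (8*t*(-(4*t^2))^j/pi^(2*j)) * S j 0)" for t :: real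
  proof -
    have "(\<Sum>j=1..N. 2^(2*j) * (2^(2*j) - 1) * bernoulli (2*j) / fact (2*j) * t^(2*j-1))
       = (\<Sum>j<N. 2^(2*Suc j) * (2^(2*Suc j) - 1) * bernoulli (2*Suc j) / fact (2*Suc j) * t^(2*Suc j-1))"
      using sum.atLeast1_atMost_eq[of "\<lambda>j. 2^(2*j) * (2^(2*j) - 1) * bernoulli (2*j) / fact (2*j) * t^(2*j-1)" N]
      by simp
    also have "\<dots> = (\<Sum>j<N. (8*t*(-(4*t^2))^j/pi^(2*j)) * S j 0)"
    proof (rule sum.cong[OF refl])
      fix j
      have e: "2*Suc j = 2*j+2" by simp
      have "2^(2*Suc j) * (2^(2*Suc j) - 1) * bernoulli (2*Suc j) / fact (2*Suc j) * t^(2*Suc j-1)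
          = 2^(2*j+3) * (-1)^j * S j 0 / pi^(2*j) * t^(2*j+1)"
        unfolding e coef by simp
      also have "\<dots> = (8*t*(-(4*t^2))^j/pi^(2*j)) * S j 0"
        unfolding pow_aux by (simp add: power_add algebra_simps)
      finally show "2^(2*Suc j) * (2^(2*Suc j) - 1) * bernoulli (2*Suc j) / fact (2*Suc j) * t^(2*Suc j-1)
          = (8*t*(-(4*t^2))^j/pi^(2*j)) * S j 0" .
    qed
    finally show ?thesis .
  qed
  have Sdef: "(\<Sum>k. 1 / ((2 * real (Suc k) - 1)^(2*N) * (pi^2 * (2 * real (Suc k) - 1)^2 + 4 * t^2))) = S N t" for t
    unfolding S_def T_def[abs_def] by (rule refl)
  show ?thesis
  proof (intro conjI allI impI)
    fix t :: real
    show "tanh t = (\<Sum>j=1..N. 2^(2*j) * (2^(2*j) - 1) * bernoulli (2*j) / fact (2*j) * t^(2*j-1))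
             + (-1)^N * 2^(2*N+3) * t^(2*N+1) / pi^(2*N) *
               (\<Sum>k. 1 / ((2 * real (Suc k) - 1)^(2*N) * (pi^2 * (2 * real (Suc k) - 1)^2 + 4 * t^2)))"
      unfolding P Sdef using expand[of t N] by simp
  next
    fix t :: real assume t: "t \<noteq> 0"
    define \<xi> where "\<xi> = S N t / S N 0"
    have p0: "0 < S N 0" "0 < S N t" by (rule S_pos)+
    show "\<exists>\<xi>. 0 < \<xi> \<and> \<xi> < 1 \<and>
           tanh t = (\<Sum>j=1..N. 2^(2*j) * (2^(2*j) - 1) * bernoulli (2*j) / fact (2*j) * t^(2*j-1))
             + \<xi> * (2^(2*N+2) * (2^(2*N+2) - 1) * bernoulli (2*N+2) / fact (2*N+2)) * t^(2*N+1)"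
    proof (intro exI[of _ \<xi>] conjI)
      show "0 < \<xi>" using p0 by (simp add: \<xi>_def)
      show "\<xi> < 1" using p0 S_less[OF t, of N] by (simp add: \<xi>_def)
      have "\<xi> * (2^(2*N+2) * (2^(2*N+2) - 1) * bernoulli (2*N+2) / fact (2*N+2)) * t^(2*N+1)
          = S N t / S N 0 * (2^(2*N+3) * (-1)^N * S N 0 / pi^(2*N)) * t^(2*N+1)"
        unfolding coef \<xi>_def ..
      also have "\<dots> = ((-1)^N*2^(2*N+3)*t^(2*N+1)/pi^(2*N)) * S N t"
        using p0 by (simp add: field_simps)
      finally show "tanh t = (\<Sum>j=1..N. 2^(2*j) * (2^(2*j) - 1) * bernoulli (2*j) / fact (2*j) * t^(2*j-1))
             + \<xi> * (2^(2*N+2) * (2^(2*N+2) - 1) * bernoulli (2*N+2) / fact (2*N+2)) * t^(2*N+1)"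
        unfolding P using expand[of t N] by simp
    qed
  qed
qed

end
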